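(* Let $\varepsilon\in(0,1/256]$, $\tau\in\Gamma$, $\mathcal S=\mathcal S(\tau)$ and $\rho\in\{1,\dots,\lceil1/\varepsilon\rceil\}^{|\tau|}$. Every extreme point $x^*$ of $P(\mathcal S,\rho)$ can be rounded to an integral vector $\bar x\in P(\mathcal S,\rho)\cap\{0,1\}^n$ with $c^T\bar x\le(1+2\varepsilon)\,c^Tx^*$.
   Context: Minimum Knapsack data: $n$ items with costs $c\in\mathbb{R}^n_{\ge0}$, weights $w\in\mathbb{R}^n_{\ge0}$, target $b$; items are indexed so that $1=c_1\ge c_2\ge\dots\ge c_n$. $C_\varepsilon=\lceil\log_{1+\varepsilon}(1/\varepsilon)\rceil$. $\Gamma$ is the set of integer vectors $\tau=(\tau_1,\dots,\tau_K)\in\mathbb{Z}_{\ge0}^K$ with $0\le K=|\tau|\le\lceil2\sqrt{C_\varepsilon}\rceil$, $\tau_k+k\le\tau_{k+1}$ for $k\in[K-1]$, and $\tau_K\le C_\varepsilon-1$. For $\tau\in\Gamma$, $\mathcal S(\tau)=\{S_1,\dots,S_K,S_\infty\}$ where $S_k=\{i\in\{2,\dots,n\}:(1+\varepsilon)^{-\tau_k}\ge c_i>(1+\varepsilon)^{-\min\{\tau_k+k,C_\varepsilon\}}\}$ for $k\in[K]$, and $S_\infty=\{i\in\{2,\dots,n\}: c_i\le(1+\varepsilon)^{-C_\varepsilon}\text{ and } c_i<\min_{l\in S_K}c_l\}$ (the second condition omitted if $K=0$). For $\rho\in\{1,\dots,\lceil1/\varepsilon\rceil\}^K$, $P(\mathcal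 S,\rho)$ is the set of $x\in\mathbb{R}^n$ with: $x_1=1$; $w^Tx\ge b$; $\sum_{i\in S_k}x_i=\rho_k$ for $k\in[K]$ with $\rho_k<\lceil1/\varepsilon\rceil$; $\sum_{i\in S_k}x_i\ge\rho_k$ for $k\in[K]$ with $\rho_k=\lceil1/\varepsilon\rceil$; $x_i=0$ for $i\in\{2,\dots,n\}\setminus\bigcup_{k\in[K]\cup\{\infty\}}S_k$; $0\le x_i\le1$ for $i\in\bigcup_{k\in[K]\cup\{\infty\}}S_k$. *)

theory Defs
  imports Complex_Main
begin

(* Vectors in R^n are modelled as functions nat => real whose support lies in {1..n}
   (coordinates outside {1..n} are 0). Index k in [K] of the paper corresponds to
   list position k-1. *)

definition C_eps :: "real \<Rightarrow> nat" where
  "C_eps \<epsilon> = nat \<lceil>log (1 + \<epsilon>) (1 / \<epsilon>)\<rceil>"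

definition Gamma :: "real \<Rightarrow> nat list set" where
  "Gamma \<epsilon> = {\<tau>. length \<tau> \<le> nat \<lceil>2 * sqrt (real (C_eps \<epsilon>))\<rceil>
      \<and> (\<forall>k\<in>{1..<length \<tau>}. \<tau> ! (k - 1) + k \<le> \<tau> ! k)
      \<and> (\<tau> \<noteq> [] \<longrightarrow> int (last \<tau>) \<le> int (C_eps \<epsilon>) - 1)}"

definition S_k :: "real \<Rightarrow> nat \<Rightarrow> (nat \<Rightarrow> real) \<Rightarrow> nat list \<Rightarrow> nat \<Rightarrow> nat set" where
  "S_k \<epsilon> n c \<tau> k = {i \<in> {2..n}. inverse ((1 + \<epsilon>) ^ (\<tau> ! (k - 1))) \<ge> c i
      \<and> c i > inverse ((1 + \<epsilon>) ^ (min (\<tau> ! (k - 1) + k) (C_eps \<epsilon>)))}"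

(* S_infinity; "c_i < min_{l in S_K} c_l" is read as "c_i < c_l for all l in S_K"
   (vacuous if S_K is empty), and omitted if K = 0 *)
definition S_inf :: "real \<Rightarrow> nat \<Rightarrow> (nat \<Rightarrow> real) \<Rightarrow> nat list \<Rightarrow> nat set" where
  "S_inf \<epsilon> n c \<tau> = {i \<in> {2..n}. c i \<le> inverse ((1 + \<epsilon>) ^ (C_eps \<epsilon>))
      \<and> (\<tau> \<noteq> [] \<longrightarrow> (\<forall>l\<in>S_k \<epsilon> n c \<tau> (length \<tau>). c i < c l))}"

definition S_all :: "real \<Rightarrow> nat \<Rightarrow> (nat \<Rightarrow> real) \<Rightarrow> nat list \<Rightarrow> nat set" where
  "S_all \<epsilon> n c \<tau> = (\<Union>k\<in>{1..length \<tau>}. S_k \<epsilon> n c \<tau> k) \<union> S_inf \<epsilon> n c \<tau>"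

definition P_poly :: "real \<Rightarrow> nat \<Rightarrow> (nat \<Rightarrow> real) \<Rightarrow> (nat \<Rightarrow> real) \<Rightarrow> real
      \<Rightarrow> nat list \<Rightarrow> nat list \<Rightarrow> (nat \<Rightarrow> real) set" where
  "P_poly \<epsilon> n c w b \<tau> \<rho> = {x.
      (\<forall>i. i \<notin> {1..n} \<longrightarrow> x i = 0)
    \<and> x 1 = 1
    \<and> (\<Sum>i=1..n. w i * x i) \<ge> b
    \<and> (\<forall>k\<in>{1..length \<tau>}. \<rho> ! (k - 1) < nat \<lceil>1 / \<epsilon>\<rceil> \<longrightarrow>
          (\<Sum>i\<in>S_k \<epsilon> n c \<tau> k. x i) = real (\<rho> ! (k - 1)))
    \<and> (\<forall>k\<in>{1..length \<tau>}. \<rho> ! (k - 1) = nat \<lceil>1 / \<epsilon>\<rceil> \<longrightarrow>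
          (\<Sum>i\<in>S_k \<epsilon> n c \<tau> k. x i) \<ge> real (\<rho> ! (k - 1)))
    \<and> (\<forall>i\<in>{2..n} - S_all \<epsilon> n c \<tau>. x i = 0)
    \<and> (\<forall>i\<in>S_all \<epsilon> n c \<tau>. 0 \<le> x i \<and> x i \<le> 1)}"

definition extreme_pt :: "(nat \<Rightarrow> real) \<Rightarrow> (nat \<Rightarrow> real) set \<Rightarrow> bool" where
  "extreme_pt x P \<longleftrightarrow> x \<in> P \<and> \<not> (\<exists>y\<in>P. \<exists>z\<in>P. y \<noteq> z \<and>
      (\<exists>t::real. 0 < t \<and> t < 1 \<and> x = (\<lambda>i. (1 - t) * y i + t * z i)))"

end

theory Submission
  imports Defs
begin

locale mk =
  fixes \<epsilon> b :: real and n :: nat and c w :: "nat \<Rightarrow> real" and \<tau> \<rho> :: "nat list"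
  assumes eps: "0 < \<epsilon>"
  and n1: "1 \<le> n"
  and c_nonneg: "\<forall>i\<in>{1..n}. 0 \<le> c i"
  and w_nonneg: "\<forall>i\<in>{1..n}. 0 \<le> w i"
  and c1: "c 1 = 1"
  and tau: "\<tau> \<in> Gamma \<epsilon>"
  and rho_len: "length \<rho> = length \<tau>"
  and rho_range: "\<forall>k<length \<rho>. 1 \<le> \<rho> ! k \<and> \<rho> ! k \<le> nat \<lceil>1 / \<epsilon>\<rceil>"
begin

abbreviation PP where "PP \<equiv> P_poly \<epsilon> n c w b \<tau> \<rho>"
abbreviation S where "S k \<equiv> S_k \<epsilon> n c \<tau> k"
abbreviation KK where "KK \<equiv> length \<tau>"
abbreviation RR where "RR \<equiv> nat \<lceil>1 / \<epsilon>\<rceil>"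

lemma S_sub: "S k \<subseteq> {2..n}" by (auto simp: S_k_def)
lemma fin_S: "finite (S k)" using finite_subset[OF S_sub] by auto
lemma Sall_sub: "S_all \<epsilon> n c \<tau> \<subseteq> {2..n}" by (auto simp: S_all_def S_inf_def S_k_def)

lemma chain: "1 \<le> l \<Longrightarrow> l < k \<Longrightarrow> k \<le> KK \<Longrightarrow> \<tau>!(l-1) + l \<le> \<tau>!(k-1)"
proof (induction k)
  case 0 thus ?case by simp
next
  case (Suc k0)
  have g: "\<forall>k\<in>{1..<KK}. \<tau>!(k-1) + k \<le> \<tau>!k" using tau by (simp add: Gamma_def)
  show ?case
  proof (cases "l = k0")
    case True then show ?thesis using g Suc.prems by auto
  next
    case False
    then have "l < k0" using Suc.prems by simp
    with Suc.IH Suc.prems have "\<tau>!(l-1)+l \<le> \<tau>!(k0-1)" by simp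
    moreover have "\<tau>!(k0-1) + k0 \<le> \<tau>!k0" using g \<open>l<k0\<close> Suc.prems by auto
    ultimately show ?thesis by simp
  qed
qed

lemma pow_mono: "a \<le> a' \<Longrightarrow> inverse ((1+\<epsilon>)^a') \<le> inverse ((1+\<epsilon>)^a)"
  apply (rule le_imp_inverse_le)
  using eps by (auto intro: power_increasing)

lemma disj_lt: assumes "1 \<le> l" "l < k" "k \<le> KK" "i \<in> S l" "i \<in> S k" shows False
proof -
  have ch: "\<tau>!(l-1)+l \<le> \<tau>!(k-1)" using chain assms by blast
  have 1: "c i > inverse((1+\<epsilon>)^(min (\<tau>!(l-1)+l) (C_eps \<epsilon>)))" using assms(4) by (simp add: S_k_def)
  have 2: "c i \<le> inverse((1+\<epsilon>)^(\<tau>!(k-1)))" using assms(5) by (simp add: S_k_def)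
  have "inverse((1+\<epsilon>)^(\<tau>!(k-1))) \<le> inverse((1+\<epsilon>)^(min (\<tau>!(l-1)+l) (C_eps \<epsilon>)))"
    by (rule pow_mono) (use ch in auto)
  with 1 2 show False by linarith
qed

lemma disj: "k \<in> {1..KK} \<Longrightarrow> k' \<in> {1..KK} \<Longrightarrow> k \<noteq> k' \<Longrightarrow> i \<in> S k \<Longrightarrow> i \<in> S k' \<Longrightarrow> False"
  by (metis atLeastAtMost_iff disj_lt linorder_neqE_nat)

lemma inP: assumes "x \<in> PP"
  shows "\<forall>i. i \<notin> {1..n} \<longrightarrow> x i = 0" "x 1 = 1" "(\<Sum>i=1..n. w i * x i) \<ge> b"
    "\<forall>k\<in>{1..KK}. \<rho> ! (k - 1) < RR \<longrightarrow> (\<Sum>i\<in>S k. x i) = real (\<rho> ! (k - 1))"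
    "\<forall>k\<in>{1..KK}. \<rho> ! (k - 1) = RR \<longrightarrow> (\<Sum>i\<in>S k. x i) \<ge> real (\<rho> ! (k - 1))"
    "\<forall>i\<in>{2..n} - S_all \<epsilon> n c \<tau>. x i = 0"
    "\<forall>i\<in>S_all \<epsilon> n c \<tau>. 0 \<le> x i \<and> x i \<le> 1"
  using assms unfolding P_poly_def by auto

lemma rho_le: "k \<in> {1..KK} \<Longrightarrow> 1 \<le> \<rho>!(k-1) \<and> \<rho>!(k-1) \<le> RR"
  using rho_range rho_len by (metis atLeastAtMost_iff diff_less le_trans less_numeral_extra(1) not_less)

lemma grp_ge: assumes "x \<in> PP" "k \<in> {1..KK}" shows "(\<Sum>i\<in>S k. x i) \<ge> real (\<rho> ! (k - 1))"
  using inP[OF assms(1)] rho_le[OF assms(2)] assms(2) by (metis nless_le order_refl)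

lemma box: assumes "x \<in> PP" "i \<in> {1..n}" shows "0 \<le> x i \<and> x i \<le> 1"
proof -
  note h = inP[OF assms(1)]
  show ?thesis
  proof (cases "i = 1")
    case True then show ?thesis using h by simp
  next
    case False
    then have "i \<in> {2..n}" using assms by auto
    then show ?thesis using h by (cases "i \<in> S_all \<epsilon> n c \<tau>") auto
  qed
qed

lemma perturb:
  assumes xP: "x \<in> PP"
  and supp: "\<forall>i. d i \<noteq> 0 \<longrightarrow> i \<in> {1..n} \<and> 0 < x i \<and> x i < 1"
  and wd: "(\<Sum>i=1..n. w i * d i) = 0"
  and gd: "\<forall>k\<in>{1..KK}. (\<Sum>i\<in>S k. x i) = real (\<rho>!(k-1)) \<longrightarrow> (\<Sum>i\<in>S k. d i) = 0"
  and dnz: "d j \<noteq> 0"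
  shows "\<not> extreme_pt x PP"
proof
  assume ex: "extreme_pt x PP"
  note h = inP[OF xP]
  define NT where "NT = {k\<in>{1..KK}. (\<Sum>i\<in>S k. x i) \<noteq> real (\<rho>!(k-1))}"
  define Fr where "Fr = {i\<in>{1..n}. 0 < x i \<and> x i < 1}"
  define M where "M = (\<Sum>i=1..n. \<bar>d i\<bar>) + 1"
  define Vals where "Vals = x ` Fr \<union> (\<lambda>i. 1 - x i) ` Fr \<union> (\<lambda>k. (\<Sum>i\<in>S k. x i) - real (\<rho>!(k-1))) ` NT \<union> {1}"
  define m where "m = Min Vals"
  have finV: "finite Vals" unfolding Vals_def Fr_def NT_def by auto
  have posV: "\<forall>v\<in>Vals. v > 0"
  proof
    fix v assume "v \<in> Vals"
    then consider (a) "v \<in> x ` Fr" | (b) "v \<in> (\<lambda>i. 1 - x i) ` Fr"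
      | (c) "v \<in> (\<lambda>k. (\<Sum>i\<in>S k. x i) - real (\<rho>!(k-1))) ` NT" | (d) "v = 1" unfolding Vals_def by blast
    then show "v > 0"
    proof cases
      case c
      then obtain k where k: "k \<in> NT" "v = (\<Sum>i\<in>S k. x i) - real (\<rho>!(k-1))" by blast
      then have "k \<in> {1..KK}" "(\<Sum>i\<in>S k. x i) \<noteq> real (\<rho>!(k-1))" unfolding NT_def by auto
      with grp_ge[OF xP] k show ?thesis by force
    qed (auto simp: Fr_def)
  qed
  have mpos: "m > 0" unfolding m_def using finV posV by (auto simp: Vals_def)
  have mle: "\<And>v. v \<in> Vals \<Longrightarrow> m \<le> v" unfolding m_def using finV by auto
  have M1: "M \<ge> 1" unfolding M_def by (simp add: sum_nonneg)
  define \<delta> where "\<delta> = m / M"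
  have dpos: "\<delta> > 0" unfolding \<delta>_def using mpos M1 by simp
  have dM: "\<delta> * (M - 1) < m" unfolding \<delta>_def using mpos M1 by (simp add: field_simps)
  have di: "\<delta> * \<bar>d i\<bar> < m" for i
  proof (cases "i \<in> {1..n}")
    case True
    have "\<bar>d i\<bar> \<le> M - 1" unfolding M_def using True
      by (simp only: diff_add_cancel add_diff_cancel_right') (rule member_le_sum, auto)
    then have "\<delta> * \<bar>d i\<bar> \<le> \<delta> * (M - 1)" using dpos by simp
    then show ?thesis using dM by simp
  next
    case False then have "d i = 0" using supp by auto
    then show ?thesis using mpos by simp
  qed
  have dS: "\<delta> * \<bar>\<Sum>i\<in>S k. d i\<bar> < m" for k
  proof -
    have "\<bar>\<Sum>i\<in>S k. d i\<bar> \<le> (\<Sum>i\<in>S k. \<bar>d i\<bar>)" by (rule sum_abs)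
    also have "\<dots> \<le> (\<Sum>i\<in>{1..n}. \<bar>d i\<bar>)" by (rule sum_mono2) (use S_sub[of k] in auto)
    finally have "\<bar>\<Sum>i\<in>S k. d i\<bar> \<le> M - 1" unfolding M_def by simp
    then have "\<delta> * \<bar>\<Sum>i\<in>S k. d i\<bar> \<le> \<delta> * (M - 1)" using dpos by simp
    then show ?thesis using dM by simp
  qed
  have yP: "(\<lambda>i. x i + s * \<delta> * d i) \<in> PP" if s: "\<bar>s\<bar> \<le> 1" for s
  proof -
    have ei: "\<bar>s * \<delta> * d i\<bar> < m" for i
    proof -
      have "\<bar>s * \<delta> * d i\<bar> = \<bar>s\<bar> * (\<delta> * \<bar>d i\<bar>)" using dpos by (simp add: abs_mult)
      also have "\<dots> \<le> \<delta> * \<bar>d i\<bar>" using s by (simp add: mult_left_le_one_le dpos)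
      finally show ?thesis using di[of i] by linarith
    qed
    have eS: "\<bar>s * \<delta> * (\<Sum>i\<in>S k. d i)\<bar> < m" for k
    proof -
      have "\<bar>s * \<delta> * (\<Sum>i\<in>S k. d i)\<bar> = \<bar>s\<bar> * (\<delta> * \<bar>\<Sum>i\<in>S k. d i\<bar>)" using dpos by (simp add: abs_mult)
      also have "\<dots> \<le> \<delta> * \<bar>\<Sum>i\<in>S k. d i\<bar>" using s by (simp add: mult_left_le_one_le dpos)
      finally show ?thesis using dS[of k] by linarith
    qed
    have d1: "d 1 = 0" using supp h(2) by force
    have kn: "(\<Sum>i=1..n. w i * (x i + s * \<delta> * d i)) = (\<Sum>i=1..n. w i * x i)"
    proof -
      have "(\<Sum>i=1..n. w i * (x i + s * \<delta> * d i)) = (\<Sum>i=1..n. w i * x i) + s * \<delta> * (\<Sum>i=1..n. w i * d i)"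
        by (simp add: algebra_simps sum.distrib sum_distrib_left)
      then show ?thesis using wd by simp
    qed
    have gs: "(\<Sum>i\<in>S k. x i + s * \<delta> * d i) = (\<Sum>i\<in>S k. x i) + s * \<delta> * (\<Sum>i\<in>S k. d i)" for k
      by (simp add: sum.distrib sum_distrib_left)
    have grp: "(\<Sum>i\<in>S k. x i + s * \<delta> * d i) \<ge> real (\<rho>!(k-1))
        \<and> ((\<Sum>i\<in>S k. x i) = real (\<rho>!(k-1)) \<longrightarrow> (\<Sum>i\<in>S k. x i + s * \<delta> * d i) = real (\<rho>!(k-1)))"
      if k: "k \<in> {1..KK}" for k
    proof (cases "(\<Sum>i\<in>S k. x i) = real (\<rho>!(k-1))")
      case True then show ?thesis using gd k gs[of k] by simp
    next
      case False
      then have "k \<in> NT" using k unfolding NT_def by auto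
      then have "m \<le> (\<Sum>i\<in>S k. x i) - real (\<rho>!(k-1))" using mle unfolding Vals_def by blast
      then show ?thesis using False gs[of k] eS[of k] by (simp add: abs_less_iff)
    qed
    have bx: "0 \<le> x i + s * \<delta> * d i \<and> x i + s * \<delta> * d i \<le> 1" if i: "i \<in> S_all \<epsilon> n c \<tau>" for i
    proof (cases "d i = 0")
      case True then show ?thesis using h(7) i by simp
    next
      case False
      then have "i \<in> Fr" using supp unfolding Fr_def by auto
      then have "m \<le> x i" "m \<le> 1 - x i" using mle unfolding Vals_def by auto
      then show ?thesis using ei[of i] by (simp add: abs_less_iff)
    qed
    show ?thesis unfolding P_poly_def
    proof (intro CollectI conjI ballI allI impI)
      fix i assume "i \<notin> {1..n}" then show "x i + s * \<delta> * d i = 0" using h(1) supp by auto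
    next
      show "x 1 + s * \<delta> * d 1 = 1" using h(2) d1 by simp
    next
      show "b \<le> (\<Sum>i=1..n. w i * (x i + s * \<delta> * d i))" using kn h(3) by simp
    next
      fix k assume k: "k \<in> {1..KK}" "\<rho> ! (k - 1) < RR"
      then show "(\<Sum>i\<in>S k. x i + s * \<delta> * d i) = real (\<rho>!(k-1))" using grp[of k] h(4) by auto
    next
      fix k assume k: "k \<in> {1..KK}" "\<rho> ! (k - 1) = RR"
      then show "(\<Sum>i\<in>S k. x i + s * \<delta> * d i) \<ge> real (\<rho>!(k-1))" using grp[of k] by auto
    next
      fix i assume "i \<in> {2..n} - S_all \<epsilon> n c \<tau>"
      then show "x i + s * \<delta> * d i = 0" using h(6) supp by force
    next
      fix i assume "i \<in> S_all \<epsilon> n c \<tau>" then show "0 \<le> x i + s * \<delta> * d i" using bx by auto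
    next
      fix i assume "i \<in> S_all \<epsilon> n c \<tau>" then show "x i + s * \<delta> * d i \<le> 1" using bx by auto
    qed
  qed
  have y1: "(\<lambda>i. x i + (-1) * \<delta> * d i) \<in> PP" by (rule yP) simp
  have y2: "(\<lambda>i. x i + 1 * \<delta> * d i) \<in> PP" by (rule yP) simp
  have ne: "(\<lambda>i. x i + (-1) * \<delta> * d i) \<noteq> (\<lambda>i. x i + 1 * \<delta> * d i)"
  proof
    assume "(\<lambda>i. x i + (-1) * \<delta> * d i) = (\<lambda>i. x i + 1 * \<delta> * d i)"
    then have "x j + (-1) * \<delta> * d j = x j + 1 * \<delta> * d j" by metis
    then show False using dpos dnz by simp
  qed
  have comb: "x = (\<lambda>i. (1 - 1/2) * (x i + (-1) * \<delta> * d i) + 1/2 * (x i + 1 * \<delta> * d i))"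
    by (rule ext) (simp add: algebra_simps)
  have "\<exists>y\<in>PP. \<exists>z\<in>PP. y \<noteq> z \<and> (\<exists>t::real. 0 < t \<and> t < 1 \<and> x = (\<lambda>i. (1 - t) * y i + t * z i))"
    by (rule bexI[OF _ y1], rule bexI[OF _ y2], intro conjI ne exI[of _ "1/2"]) (use comb in auto)
  then show False using ex unfolding extreme_pt_def by blast
qed

definition Fr where "Fr x = {i\<in>{1..n}. 0 < x i \<and> x i < 1}"

lemma sum_pt: "finite A \<Longrightarrow> (\<Sum>t\<in>A. f t * (if t = a then (\<alpha>::real) else 0)) = (if a \<in> A then f a * \<alpha> else 0)"
proof -
  assume fA: "finite A"
  have "(\<Sum>t\<in>A. f t * (if t = a then \<alpha> else 0)) = (\<Sum>t\<in>A. (if t = a then f a * \<alpha> else 0))"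
    by (rule sum.cong) auto
  also have "\<dots> = (if a \<in> A then f a * \<alpha> else 0)" using fA by (simp add: sum.delta)
  finally show ?thesis .
qed

lemma sum_pt1: "finite A \<Longrightarrow> (\<Sum>t\<in>A. (if t = a then \<alpha> else 0)) = (if a \<in> A then \<alpha> else 0)"
  by (simp add: sum.delta)

lemma G4:
  assumes xP: "x \<in> PP" and ex: "extreme_pt x PP"
  and F: "a \<in> Fr x" "bb \<in> Fr x" "p \<in> Fr x" "q \<in> Fr x"
  and kn: "\<alpha> * w a + \<beta> * w bb + \<gamma> * w p + \<eta> * w q = 0"
  and gr: "\<forall>k\<in>{1..KK}. (\<Sum>i\<in>S k. x i) = real (\<rho>!(k-1)) \<longrightarrow>
     (if a \<in> S k then \<alpha> else 0) + (if bb \<in> S k then \<beta> else 0) + (if p \<in> S k then \<gamma> else 0) + (if q \<in> S k then \<eta> else 0) = 0"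
  and nz: "(if t = a then \<alpha> else 0) + (if t = bb then \<beta> else 0) + (if t = p then \<gamma> else 0) + (if t = q then \<eta> else 0) \<noteq> 0"
  shows False
proof -
  define d where "d = (\<lambda>t. (if t = a then \<alpha> else 0) + (if t = bb then \<beta> else 0) + (if t = p then \<gamma> else 0) + (if t = q then \<eta> else 0))"
  have "\<not> extreme_pt x PP"
  proof (rule perturb[OF xP, of d t])
    show "\<forall>i. d i \<noteq> 0 \<longrightarrow> i \<in> {1..n} \<and> 0 < x i \<and> x i < 1"
    proof (intro allI impI)
      fix i assume "d i \<noteq> 0"
      then have "i = a \<or> i = bb \<or> i = p \<or> i = q" unfolding d_def by (auto split: if_splits)
      then show "i \<in> {1..n} \<and> 0 < x i \<and> x i < 1" using F unfolding Fr_def by auto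
    qed
    have ab: "a \<in> {1..n}" "bb \<in> {1..n}" "p \<in> {1..n}" "q \<in> {1..n}" using F unfolding Fr_def by auto
    show "(\<Sum>i=1..n. w i * d i) = 0"
    proof -
      have "(\<Sum>i=1..n. w i * d i) = w a * \<alpha> + w bb * \<beta> + w p * \<gamma> + w q * \<eta>"
        unfolding d_def using ab by (simp add: distrib_left sum.distrib sum_pt del: One_nat_def)
      then show ?thesis using kn by (simp add: algebra_simps)
    qed
    show "\<forall>k\<in>{1..KK}. (\<Sum>i\<in>S k. x i) = real (\<rho>!(k-1)) \<longrightarrow> (\<Sum>i\<in>S k. d i) = 0"
      using gr unfolding d_def by (simp add: sum.distrib sum_pt1 fin_S)
    show "d t \<noteq> 0" using nz unfolding d_def .
  qed
  then show False using ex by simp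
qed

definition free where "free x i \<longleftrightarrow> (\<forall>k\<in>{1..KK}. i \<in> S k \<longrightarrow> (\<Sum>j\<in>S k. x j) \<noteq> real (\<rho>!(k-1)))"
definition sg where "sg i j \<longleftrightarrow> (\<forall>k\<in>{1..KK}. i \<in> S k \<longleftrightarrow> j \<in> S k)"

lemma L1: assumes "x \<in> PP" "extreme_pt x PP" "a \<in> Fr x" "free x a" "w a = 0" shows False
  by (rule G4[OF assms(1,2,3,3,3,3), of 1 0 0 0 a]) (use assms(4,5) in \<open>auto simp: free_def\<close>)

lemma L2: assumes "x \<in> PP" "extreme_pt x PP" "a \<in> Fr x" "bb \<in> Fr x" "free x a" "free x bb" "a \<noteq> bb" "w a \<noteq> 0"
  shows False
  by (rule G4[OF assms(1,2,3,4,3,3), of "w bb" "- w a" 0 0 bb]) (use assms(5-8) in \<open>auto simp: free_def\<close>)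

lemma L3: assumes "x \<in> PP" "extreme_pt x PP" "a \<in> Fr x" "bb \<in> Fr x" "sg a bb" "a \<noteq> bb" "w a = w bb"
  shows False
  by (rule G4[OF assms(1,2,3,4,3,3), of 1 "-1" 0 0 bb]) (use assms(5-7) in \<open>auto simp: sg_def\<close>)

lemma L4: assumes "x \<in> PP" "extreme_pt x PP" "a \<in> Fr x" "bb \<in> Fr x" "m \<in> Fr x" "sg a bb" "w a \<noteq> w bb"
  "free x m" "m \<noteq> a" "m \<noteq> bb"
  shows False
  by (rule G4[OF assms(1,2,3,4,5,5), of "w m" "- w m" "-(w a - w bb)" 0 m])
    (use assms(6-10) in \<open>auto simp: sg_def free_def algebra_simps\<close>)

lemma TP: assumes "x \<in> PP" "extreme_pt x PP" "a \<in> Fr x" "bb \<in> Fr x" "p \<in> Fr x" "q \<in> Fr x"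
  "sg a bb" "sg p q" "w a \<noteq> w bb" "q \<noteq> p" "q \<noteq> a" "q \<noteq> bb"
  shows False
  by (rule G4[OF assms(1-6), of "w p - w q" "-(w p - w q)" "-(w a - w bb)" "w a - w bb" q])
    (use assms(7-12) in \<open>auto simp: sg_def algebra_simps\<close>)

lemma Fr_sub: assumes "x \<in> PP" "i \<in> Fr x" shows "i \<in> {2..n}" "i \<in> S_all \<epsilon> n c \<tau>"
proof -
  note h = inP[OF assms(1)]
  show i2: "i \<in> {2..n}" using assms(2) h(2) unfolding Fr_def by (cases "i = 1") auto
  show "i \<in> S_all \<epsilon> n c \<tau>"
  proof (rule ccontr)
    assume "i \<notin> S_all \<epsilon> n c \<tau>"
    then have "x i = 0" using h(6) i2 by blast
    then show False using assms(2) unfolding Fr_def by simp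
  qed
qed

lemma nonFr: assumes "x \<in> PP" "i \<in> {1..n}" "i \<notin> Fr x" shows "x i = 0 \<or> x i = 1"
  using box[OF assms(1,2)] assms(2,3) unfolding Fr_def by auto

lemma Ints01: assumes "x \<in> PP" "A \<subseteq> {1..n}" "A \<inter> Fr x = {}" shows "(\<Sum>i\<in>A. x i) \<in> \<int>"
proof (rule Ints_sum)
  fix i assume "i \<in> A"
  then have "x i = 0 \<or> x i = 1" using nonFr[OF assms(1)] assms(2,3) by blast
  then show "x i \<in> \<int>" by auto
qed

lemma Ints_01: "(y::real) \<in> \<int> \<Longrightarrow> 0 < y \<Longrightarrow> y < 1 \<Longrightarrow> False"
proof -
  assume "y \<in> \<int>" "0 < y" "y < 1"
  then obtain m where "y = of_int m" by (auto elim: Ints_cases)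
  with \<open>0 < y\<close> \<open>y < 1\<close> have "0 < m" "m < 1" by auto
  then show False by auto
qed

lemma Ints_02: "(y::real) \<in> \<int> \<Longrightarrow> 0 < y \<Longrightarrow> y < 2 \<Longrightarrow> y = 1"
proof -
  assume "y \<in> \<int>" "0 < y" "y < 2"
  then obtain m where "y = of_int m" by (auto elim: Ints_cases)
  with \<open>0 < y\<close> \<open>y < 2\<close> have "0 < m" "m < 2" by auto
  then have "m = 1" by auto
  with \<open>y = of_int m\<close> show "y = 1" by simp
qed

lemma partner: assumes xP: "x \<in> PP" and i: "i \<in> Fr x" and k: "k \<in> {1..KK}" "i \<in> S k"
  and t: "(\<Sum>j\<in>S k. x j) = real (\<rho>!(k-1))"
  shows "\<exists>j\<in>Fr x. j \<in> S k \<and> j \<noteq> i"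
proof (rule ccontr)
  assume "\<not> ?thesis"
  then have dj: "(S k - {i}) \<inter> Fr x = {}" by auto
  have "(S k - {i}) \<subseteq> {1..n}" using S_sub[of k] by auto
  then have Z: "(\<Sum>j\<in>S k - {i}. x j) \<in> \<int>" using Ints01[OF xP _ dj] by blast
  have "(\<Sum>j\<in>S k. x j) = x i + (\<Sum>j\<in>S k - {i}. x j)" using k(2) fin_S by (simp add: sum.remove)
  then have "x i = real (\<rho>!(k-1)) - (\<Sum>j\<in>S k - {i}. x j)" using t by simp
  then have "x i \<in> \<int>" using Z by simp
  then show False using Ints_01 i unfolding Fr_def by auto
qed

lemma same_sg: "k \<in> {1..KK} \<Longrightarrow> i \<in> S k \<Longrightarrow> j \<in> S k \<Longrightarrow> sg i j"
  unfolding sg_def by (metis disj)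

lemma struct3:
  assumes xP: "x \<in> PP" and ex: "extreme_pt x PP"
  shows "Fr x = {} \<or> (\<exists>j. Fr x = {j} \<and> free x j)
    \<or> (\<exists>a bb k. k \<in> {1..KK} \<and> a \<in> S k \<and> bb \<in> S k \<and> (\<Sum>j\<in>S k. x j) = real (\<rho>!(k-1))
         \<and> a \<noteq> bb \<and> Fr x = {a, bb} \<and> w bb \<le> w a)"
proof (cases "Fr x = {}")
  case True then show ?thesis by simp
next
  case ne: False
  show ?thesis
  proof (cases "\<exists>j\<in>Fr x. free x j")
    case True
    then obtain j where j: "j \<in> Fr x" "free x j" by blast
    have "\<forall>m\<in>Fr x. m = j"
    proof (rule ballI, rule ccontr)
      fix m assume m: "m \<in> Fr x" "m \<noteq> j"
      show False
      proof (cases "free x m")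
        case True
        show False
        proof (cases "w j = 0")
          case True then show False using L1[OF xP ex j] by blast
        next
          case False show False by (rule L2[OF xP ex j(1) m(1) j(2) \<open>free x m\<close>]) (use m(2) False in auto)
        qed
      next
        case False
        then obtain k where k: "k \<in> {1..KK}" "m \<in> S k" "(\<Sum>j\<in>S k. x j) = real (\<rho>!(k-1))"
          unfolding free_def by blast
        obtain m' where m': "m' \<in> Fr x" "m' \<in> S k" "m' \<noteq> m" using partner[OF xP m(1) k] by blast
        have sgm: "sg m m'" using same_sg k m' by blast
        have "j \<notin> S k" using j(2) k unfolding free_def by blast
        then have "j \<noteq> m'" using m' by auto
        show False
        proof (cases "w m = w m'")
          case True show False by (rule L3[OF xP ex m(1) m'(1) sgm]) (use m'(3) True in auto)
        next
          case False show False by (rule L4[OF xP ex m(1) m'(1) j(1) sgm False j(2)]) (use m(2) \<open>j \<noteq> m'\<close> in auto)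
        qed
      qed
    qed
    then have "Fr x = {j}" using j(1) by blast
    then show ?thesis using j(2) by (intro disjI2 disjI1 exI[of _ j]) simp
  next
    case False
    then have allL: "\<forall>j\<in>Fr x. \<not> free x j" by blast
    obtain i where i: "i \<in> Fr x" using ne by blast
    then obtain k where k: "k \<in> {1..KK}" "i \<in> S k" "(\<Sum>j\<in>S k. x j) = real (\<rho>!(k-1))"
      using allL unfolding free_def by blast
    obtain j where j: "j \<in> Fr x" "j \<in> S k" "j \<noteq> i" using partner[OF xP i k] by blast
    have sgij: "sg i j" using same_sg k j by blast
    have wne: "w i \<noteq> w j" by (rule notI, rule L3[OF xP ex i j(1) sgij]) (use j(3) in auto)
    have "\<forall>m\<in>Fr x. m = i \<or> m = j"
    proof (rule ballI, rule ccontr)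
      fix m assume m: "m \<in> Fr x" "\<not> (m = i \<or> m = j)"
      obtain k' where k': "k' \<in> {1..KK}" "m \<in> S k'" "(\<Sum>j\<in>S k'. x j) = real (\<rho>!(k'-1))"
        using allL m(1) unfolding free_def by blast
      show False
      proof (cases "k' = k")
        case True
        have "sg i m" using same_sg k k' True by blast
        show False by (rule TP[OF xP ex i j(1) i m(1) sgij \<open>sg i m\<close> wne]) (use m(2) in auto)
      next
        case False
        obtain m' where m': "m' \<in> Fr x" "m' \<in> S k'" "m' \<noteq> m" using partner[OF xP m(1) k'] by blast
        have "m' \<noteq> i" "m' \<noteq> j" using disj[OF k(1) k'(1)] False m'(2) k(2) j(2) by blast+
        moreover have "sg m m'" using same_sg k' m' by blast
        ultimately show False by (intro TP[OF xP ex i j(1) m(1) m'(1) sgij _ wne]) (use m'(3) in auto)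
      qed
    qed
    then have F2: "Fr x = {i, j}" using i j(1) by auto
    show ?thesis
    proof (cases "w j \<le> w i")
      case True show ?thesis by (intro disjI2 exI[of _ i] exI[of _ j] exI[of _ k] conjI) (use k i j F2 True in simp_all)
    next
      case False
      then have "w i \<le> w j" by simp
      moreover have "Fr x = {j, i}" using F2 by auto
      ultimately show ?thesis by (intro disjI2 exI[of _ j] exI[of _ i] exI[of _ k] conjI) (use k i j in simp_all)
    qed
  qed
qed

lemma powC: "inverse ((1+\<epsilon>)^(C_eps \<epsilon>)) \<le> \<epsilon>"
proof -
  have b1: "1 < 1 + \<epsilon>" using eps by simp
  have lg: "log (1+\<epsilon>) (1/\<epsilon>) \<le> real (C_eps \<epsilon>)"
    unfolding C_eps_def by linarith
  have "1/\<epsilon> = (1+\<epsilon>) powr (log (1+\<epsilon>) (1/\<epsilon>))" using eps b1 by simp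
  also have "\<dots> \<le> (1+\<epsilon>) powr (real (C_eps \<epsilon>))" using b1 lg by (intro powr_mono) auto
  also have "\<dots> = (1+\<epsilon>)^(C_eps \<epsilon>)" using eps by (simp add: powr_realpow)
  finally have "1/\<epsilon> \<le> (1+\<epsilon>)^(C_eps \<epsilon>)" .
  then have "inverse ((1+\<epsilon>)^(C_eps \<epsilon>)) \<le> inverse (1/\<epsilon>)" using eps by (intro le_imp_inverse_le) auto
  then show ?thesis by simp
qed

lemma bern: "1 - real k * \<epsilon> \<le> inverse ((1+\<epsilon>)^k)"
proof (cases "\<epsilon> \<le> 1")
  case True
  have "1 + real k * (-\<epsilon>) \<le> (1 + (-\<epsilon>))^k" by (rule Bernoulli_inequality) (use True in simp)
  also have "\<dots> \<le> (inverse (1+\<epsilon>))^k"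
  proof (rule power_mono)
    have "(1 - \<epsilon>) * (1 + \<epsilon>) \<le> 1" by (simp add: algebra_simps)
    then show "1 + - \<epsilon> \<le> inverse (1 + \<epsilon>)" using eps by (simp add: field_simps)
  qed (use True in simp)
  finally show ?thesis by (simp add: power_inverse)
next
  case False
  show ?thesis
  proof (cases "k = 0")
    case True then show ?thesis by simp
  next
    case False
    then have "real k * \<epsilon> \<ge> 1 * 1" using \<open>\<not> \<epsilon> \<le> 1\<close> by (intro mult_mono) auto
    moreover have "inverse ((1+\<epsilon>)^k) \<ge> 0" using eps by simp
    ultimately show ?thesis by linarith
  qed
qed

lemma c_lb: assumes "k \<in> {1..KK}" "i \<in> S k"
  shows "c i \<ge> inverse ((1+\<epsilon>)^(\<tau>!(k-1))) * inverse ((1+\<epsilon>)^k)"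
    "c i \<le> inverse ((1+\<epsilon>)^(\<tau>!(k-1)))"
proof -
  have 1: "c i > inverse((1+\<epsilon>)^(min (\<tau>!(k-1)+k) (C_eps \<epsilon>)))" using assms(2) by (simp add: S_k_def)
  have "inverse((1+\<epsilon>)^(\<tau>!(k-1)+k)) \<le> inverse((1+\<epsilon>)^(min (\<tau>!(k-1)+k) (C_eps \<epsilon>)))"
    by (rule pow_mono) simp
  then show "c i \<ge> inverse ((1+\<epsilon>)^(\<tau>!(k-1))) * inverse ((1+\<epsilon>)^k)" using 1
    by (simp add: power_add)
  show "c i \<le> inverse ((1+\<epsilon>)^(\<tau>!(k-1)))" using assms(2) by (simp add: S_k_def)
qed

lemma grp_c: assumes xP: "x \<in> PP" and k: "k \<in> {1..KK}"
  shows "(\<Sum>i\<in>S k. c i * x i) \<ge> inverse ((1+\<epsilon>)^(\<tau>!(k-1))) * inverse ((1+\<epsilon>)^k) * (\<Sum>i\<in>S k. x i)"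
proof -
  have "(\<Sum>i\<in>S k. c i * x i) \<ge> (\<Sum>i\<in>S k. inverse ((1+\<epsilon>)^(\<tau>!(k-1))) * inverse ((1+\<epsilon>)^k) * x i)"
  proof (rule sum_mono)
    fix i assume i: "i \<in> S k"
    have "0 \<le> x i" using box[OF xP] S_sub[of k] i by auto
    then show "inverse ((1+\<epsilon>)^(\<tau>!(k-1))) * inverse ((1+\<epsilon>)^k) * x i \<le> c i * x i"
      using c_lb(1)[OF k i] by (intro mult_right_mono) auto
  qed
  then show ?thesis by (simp add: sum_distrib_left)
qed

lemma u_le1: "inverse ((1+\<epsilon>)^m) \<le> 1"
proof -
  have "1 \<le> (1+\<epsilon>)^m" by (rule one_le_power) (use eps in simp)
  then show ?thesis by (simp add: inverse_le_1_iff)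
qed

lemma u_pos: "0 < inverse ((1+\<epsilon>)^m)"
  using eps by simp

lemma cx_nonneg: assumes "x \<in> PP" "i \<in> {1..n}" shows "0 \<le> c i * x i"
  using box[OF assms] c_nonneg assms(2) by simp

lemma cost_lb: assumes xP: "x \<in> PP" and k: "k \<in> {1..KK}"
  shows "(\<Sum>i=1..n. c i * x i) \<ge> real k * inverse ((1+\<epsilon>)^(\<tau>!(k-1))) + (\<Sum>i\<in>S k. c i * x i)"
proof -
  define u where "u = inverse ((1+\<epsilon>)^(\<tau>!(k-1)))"
  define V where "V = (\<Union>l\<in>{1..k}. S l)"
  have n1: "1 \<le> n" by (rule n1)
  have V2: "V \<subseteq> {2..n}" unfolding V_def using S_sub by blast
  have finV: "finite V" using V2 finite_subset by blast
  have "(\<Sum>i\<in>insert 1 V. c i * x i) \<le> (\<Sum>i=1..n. c i * x i)"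
    by (rule sum_mono2) (use V2 cx_nonneg[OF xP] n1 in auto)
  moreover have "(\<Sum>i\<in>insert 1 V. c i * x i) = c 1 * x 1 + (\<Sum>i\<in>V. c i * x i)"
    using V2 finV by (subst sum.insert) auto
  moreover have "(\<Sum>i\<in>V. c i * x i) = (\<Sum>l\<in>{1..k}. (\<Sum>i\<in>S l. c i * x i))"
    unfolding V_def
  proof (rule sum.UNION_disjoint)
    show "\<forall>l\<in>{1..k}. \<forall>l'\<in>{1..k}. l \<noteq> l' \<longrightarrow> S l \<inter> S l' = {}"
      using disj k by fastforce
  qed (auto simp: fin_S)
  moreover have "(\<Sum>l\<in>{1..k}. (\<Sum>i\<in>S l. c i * x i)) = (\<Sum>l\<in>{1..<k}. (\<Sum>i\<in>S l. c i * x i)) + (\<Sum>i\<in>S k. c i * x i)"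
  proof -
    have "{1..k} = insert k {1..<k}" using k by auto
    then show ?thesis by (simp add: add.commute)
  qed
  moreover have "(\<Sum>l\<in>{1..<k}. (\<Sum>i\<in>S l. c i * x i)) \<ge> (\<Sum>l\<in>{1..<k}. u)"
  proof (rule sum_mono)
    fix l assume l: "l \<in> {1..<k}"
    then have lK: "l \<in> {1..KK}" using k by auto
    have ch: "\<tau>!(l-1)+l \<le> \<tau>!(k-1)" using chain l k by auto
    have "u \<le> inverse ((1+\<epsilon>)^(\<tau>!(l-1) + l))" unfolding u_def by (rule pow_mono[OF ch])
    also have "\<dots> = inverse ((1+\<epsilon>)^(\<tau>!(l-1))) * inverse ((1+\<epsilon>)^l) * 1" by (simp add: power_add)
    also have "\<dots> \<le> inverse ((1+\<epsilon>)^(\<tau>!(l-1))) * inverse ((1+\<epsilon>)^l) * (\<Sum>i\<in>S l. x i)"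
    proof (rule mult_left_mono)
      show "1 \<le> (\<Sum>i\<in>S l. x i)" using grp_ge[OF xP lK] rho_le[OF lK] by linarith
    qed (use u_pos in \<open>simp add: less_imp_le\<close>)
    also have "\<dots> \<le> (\<Sum>i\<in>S l. c i * x i)" by (rule grp_c[OF xP lK])
    finally show "u \<le> (\<Sum>i\<in>S l. c i * x i)" .
  qed
  moreover have "(\<Sum>l\<in>{1..<k}. u) = real (k - 1) * u" by simp
  moreover have "u \<le> 1" unfolding u_def by (rule u_le1)
  moreover have "c 1 * x 1 = 1" using c1 inP(2)[OF xP] by simp
  moreover have "real k * u = real (k-1) * u + u" using k by (simp add: algebra_simps of_nat_diff)
  ultimately show ?thesis unfolding u_def[symmetric] by linarith
qed

lemma cost_ge1: assumes xP: "x \<in> PP" shows "(\<Sum>i=1..n. c i * x i) \<ge> 1"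
proof -
  have "c 1 * x 1 \<le> (\<Sum>i=1..n. c i * x i)"
    by (rule member_le_sum) (use cx_nonneg[OF xP] n1 in auto)
  then show ?thesis using c1 inP(2)[OF xP] by simp
qed

lemma sum_shift: "finite A \<Longrightarrow> (\<Sum>t\<in>A. f t * (x t + (if t = j then D else 0))) = (\<Sum>t\<in>A. f t * x t) + (if j \<in> A then f j * (D::real) else 0)"
  by (simp add: distrib_left sum.distrib sum_pt)

lemma sum_shift1: "finite A \<Longrightarrow> (\<Sum>t\<in>A. (x t + (if t = j then D else 0))) = (\<Sum>t\<in>A. x t) + (if j \<in> A then (D::real) else 0)"
  by (simp add: sum.distrib sum_pt1)

lemma roundB: assumes xP: "x \<in> PP" and j: "j \<in> Fr x" "free x j" "Fr x = {j}"
  shows "\<exists>xb\<in>PP. (\<forall>i\<in>{1..n}. xb i \<in> {0, 1}) \<and> (\<Sum>i=1..n. c i * xb i) \<le> (1 + 2 * \<epsilon>) * (\<Sum>i=1..n. c i * x i)"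
proof -
  note h = inP[OF xP]
  define D where "D = 1 - x j"
  define xb where "xb = (\<lambda>t. x t + (if t = j then D else 0))"
  have j2: "j \<in> {2..n}" and jS: "j \<in> S_all \<epsilon> n c \<tau>" using Fr_sub[OF xP j(1)] by auto
  have xj: "0 < x j" "x j < 1" using j(1) unfolding Fr_def by auto
  have D01: "0 < D" "D \<le> 1" using xj unfolding D_def by auto
  have kn: "(\<Sum>i=1..n. w i * xb i) = (\<Sum>i=1..n. w i * x i) + w j * D"
    unfolding xb_def using j2 by (subst sum_shift) auto
  have cs: "(\<Sum>i=1..n. c i * xb i) = (\<Sum>i=1..n. c i * x i) + c j * D"
    unfolding xb_def using j2 by (subst sum_shift) auto
  have gs: "(\<Sum>i\<in>S k. xb i) = (\<Sum>i\<in>S k. x i) + (if j \<in> S k then D else 0)" for k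
    unfolding xb_def by (rule sum_shift1[OF fin_S])
  have wj: "0 \<le> w j" and cj: "0 \<le> c j" using w_nonneg c_nonneg j2 by auto
  have xbP: "xb \<in> PP" unfolding P_poly_def
  proof (intro CollectI conjI ballI allI impI)
    fix i assume "i \<notin> {1..n}" then show "xb i = 0" using h(1) j2 unfolding xb_def by auto
  next
    show "xb 1 = 1" using h(2) j2 unfolding xb_def by auto
  next
    have "0 \<le> w j * D" using wj D01 by simp
    then show "b \<le> (\<Sum>i=1..n. w i * xb i)" using kn h(3) by linarith
  next
    fix k assume k: "k \<in> {1..KK}" "\<rho> ! (k - 1) < RR"
    then have t: "(\<Sum>i\<in>S k. x i) = real (\<rho>!(k-1))" using h(4) by blast
    then have "j \<notin> S k" using j(2) k(1) unfolding free_def by blast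
    then show "(\<Sum>i\<in>S k. xb i) = real (\<rho>!(k-1))" using gs[of k] t by simp
  next
    fix k assume k: "k \<in> {1..KK}" "\<rho> ! (k - 1) = RR"
    then have "(\<Sum>i\<in>S k. x i) \<ge> real (\<rho>!(k-1))" using h(5) by blast
    then show "(\<Sum>i\<in>S k. xb i) \<ge> real (\<rho>!(k-1))" using gs[of k] D01 by simp
  next
    fix i assume "i \<in> {2..n} - S_all \<epsilon> n c \<tau>"
    then show "xb i = 0" using h(6) jS unfolding xb_def by auto
  next
    fix i assume i: "i \<in> S_all \<epsilon> n c \<tau>"
    then show "0 \<le> xb i" using h(7) D01 unfolding xb_def by auto
  next
    fix i assume i: "i \<in> S_all \<epsilon> n c \<tau>"
    then show "xb i \<le> 1" using h(7) unfolding xb_def D_def by auto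
  qed
  have int: "\<forall>i\<in>{1..n}. xb i \<in> {0, 1}"
  proof
    fix i assume i: "i \<in> {1..n}"
    show "xb i \<in> {0, 1}"
    proof (cases "i = j")
      case True then show ?thesis unfolding xb_def D_def by simp
    next
      case False
      then have "i \<notin> Fr x" using j(3) by auto
      then show ?thesis using nonFr[OF xP i] False unfolding xb_def by auto
    qed
  qed
  define cost where "cost = (\<Sum>i=1..n. c i * x i)"
  have cost1: "cost \<ge> 1" unfolding cost_def by (rule cost_ge1[OF xP])
  have cjD: "c j * D \<le> c j" using cj D01 by (simp add: mult_left_le)
  have cjb: "c j \<le> 2 * \<epsilon> * cost"
  proof -
    consider (k) k where "k \<in> {1..KK}" "j \<in> S k" | (inf) "j \<in> S_inf \<epsilon> n c \<tau>"
      using jS unfolding S_all_def by blast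
    then show ?thesis
    proof cases
      case inf
      then have "c j \<le> inverse ((1+\<epsilon>)^(C_eps \<epsilon>))" unfolding S_inf_def by auto
      also have "\<dots> \<le> \<epsilon>" by (rule powC)
      also have "\<epsilon> \<le> 2 * \<epsilon> * cost" using cost1 eps by (simp add: mult_le_cancel_left1)
      finally show ?thesis .
    next
      case k
      define u where "u = inverse ((1+\<epsilon>)^(\<tau>!(k-1)))"
      define v where "v = inverse ((1+\<epsilon>)^k)"
      have upos: "0 < u" unfolding u_def by (rule u_pos)
      have vpos: "0 < v" unfolding v_def by (rule u_pos)
      have cu: "c j \<le> u" unfolding u_def by (rule c_lb(2)[OF k])
      have nt: "(\<Sum>i\<in>S k. x i) \<noteq> real (\<rho>!(k-1))" using j(2) k unfolding free_def by blast
      have "\<rho>!(k-1) = RR"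
      proof (rule ccontr)
        assume "\<rho>!(k-1) \<noteq> RR"
        then have "\<rho>!(k-1) < RR" using rho_le[OF k(1)] by simp
        then show False using h(4) k(1) nt by blast
      qed
      then have sx: "(\<Sum>i\<in>S k. x i) \<ge> 1/\<epsilon>"
        using grp_ge[OF xP k(1)] real_nat_ceiling_ge[of "1/\<epsilon>"] by linarith
      have "u * v * (1/\<epsilon>) \<le> u * v * (\<Sum>i\<in>S k. x i)"
        by (rule mult_left_mono[OF sx]) (use upos vpos in simp)
      also have "\<dots> \<le> (\<Sum>i\<in>S k. c i * x i)" unfolding u_def v_def by (rule grp_c[OF xP k(1)])
      finally have A: "u * v * (1/\<epsilon>) \<le> (\<Sum>i\<in>S k. c i * x i)" .
      have B: "cost \<ge> real k * u + u * v * (1/\<epsilon>)"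
        using cost_lb[OF xP k(1)] A unfolding cost_def u_def by linarith
      have "2 * \<epsilon> * (real k * u + u * v * (1/\<epsilon>)) \<le> 2 * \<epsilon> * cost"
        using B eps by simp
      moreover have "2 * \<epsilon> * (real k * u + u * v * (1/\<epsilon>)) = 2 * \<epsilon> * real k * u + 2 * u * v"
        using eps by (simp add: field_simps)
      moreover have "u * (1 - real k * \<epsilon>) \<le> u * v"
        unfolding v_def by (rule mult_left_mono[OF bern]) (use upos in simp)
      ultimately have "2 * u \<le> 2 * \<epsilon> * cost" by (simp add: algebra_simps)
      then show ?thesis using cu upos by linarith
    qed
  qed
  have "(\<Sum>i=1..n. c i * xb i) \<le> (1 + 2 * \<epsilon>) * cost"
    using cs cjD cjb unfolding cost_def by (simp add: algebra_simps)
  then show ?thesis using xbP int unfolding cost_def by blast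
qed

lemma sum_shift2: "finite A \<Longrightarrow> (\<Sum>t\<in>A. f t * (x t + (if t = a then D else 0) + (if t = bb then - D else 0)))
   = (\<Sum>t\<in>A. f t * x t) + (if a \<in> A then f a * (D::real) else 0) + (if bb \<in> A then f bb * (- D) else 0)"
  by (simp add: distrib_left sum.distrib sum_pt)

lemma sum_shift21: "finite A \<Longrightarrow> (\<Sum>t\<in>A. (x t + (if t = a then D else 0) + (if t = bb then - D else 0)))
   = (\<Sum>t\<in>A. x t) + (if a \<in> A then (D::real) else 0) + (if bb \<in> A then - D else 0)"
  by (simp add: sum.distrib sum_pt1)

lemma roundC: assumes xP: "x \<in> PP" and k: "k \<in> {1..KK}" and ab: "a \<in> S k" "bb \<in> S k"
  and t: "(\<Sum>j\<in>S k. x j) = real (\<rho>!(k-1))" and ne: "a \<noteq> bb" and F: "Fr x = {a, bb}" and wab: "w bb \<le> w a"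
  shows "\<exists>xb\<in>PP. (\<forall>i\<in>{1..n}. xb i \<in> {0, 1}) \<and> (\<Sum>i=1..n. c i * xb i) \<le> (1 + 2 * \<epsilon>) * (\<Sum>i=1..n. c i * x i)"
proof -
  note h = inP[OF xP]
  have aF: "a \<in> Fr x" and bF: "bb \<in> Fr x" using F by auto
  have a2: "a \<in> {2..n}" and aS: "a \<in> S_all \<epsilon> n c \<tau>" using Fr_sub[OF xP aF] by auto
  have b2: "bb \<in> {2..n}" and bS: "bb \<in> S_all \<epsilon> n c \<tau>" using Fr_sub[OF xP bF] by auto
  have xa: "0 < x a" "x a < 1" using aF unfolding Fr_def by auto
  have xb': "0 < x bb" "x bb < 1" using bF unfolding Fr_def by auto
  have sum1: "x a + x bb = 1"
  proof -
    have dj: "(S k - {a, bb}) \<inter> Fr x = {}" using F by auto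
    have "(S k - {a, bb}) \<subseteq> {1..n}" using S_sub[of k] by auto
    then have Z: "(\<Sum>j\<in>S k - {a, bb}. x j) \<in> \<int>" using Ints01[OF xP _ dj] by blast
    have "(\<Sum>j\<in>S k. x j) = x a + (\<Sum>j\<in>S k - {a}. x j)" using ab fin_S by (simp add: sum.remove)
    also have "(\<Sum>j\<in>S k - {a}. x j) = x bb + (\<Sum>j\<in>S k - {a} - {bb}. x j)"
      using ab ne fin_S by (subst sum.remove) auto
    also have "S k - {a} - {bb} = S k - {a, bb}" by auto
    finally have "x a + x bb = real (\<rho>!(k-1)) - (\<Sum>j\<in>S k - {a, bb}. x j)" using t by simp
    then have "x a + x bb \<in> \<int>" using Z by simp
    then show ?thesis using Ints_02 xa xb' by auto
  qed
  define D where "D = x bb"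
  define xb where "xb = (\<lambda>t. x t + (if t = a then D else 0) + (if t = bb then - D else 0))"
  have D01: "0 < D" "D \<le> 1" using xb' unfolding D_def by auto
  have kn: "(\<Sum>i=1..n. w i * xb i) = (\<Sum>i=1..n. w i * x i) + w a * D + w bb * (- D)"
    unfolding xb_def using a2 b2 by (subst sum_shift2) auto
  have cs: "(\<Sum>i=1..n. c i * xb i) = (\<Sum>i=1..n. c i * x i) + c a * D + c bb * (- D)"
    unfolding xb_def using a2 b2 by (subst sum_shift2) auto
  have sgab: "sg a bb" using same_sg k ab by blast
  have gs: "(\<Sum>i\<in>S k'. xb i) = (\<Sum>i\<in>S k'. x i)" if k': "k' \<in> {1..KK}" for k'
  proof -
    have "(\<Sum>i\<in>S k'. xb i) = (\<Sum>i\<in>S k'. x i) + (if a \<in> S k' then D else 0) + (if bb \<in> S k' then - D else 0)"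
      unfolding xb_def by (rule sum_shift21[OF fin_S])
    moreover have "a \<in> S k' \<longleftrightarrow> bb \<in> S k'" using sgab k' unfolding sg_def by blast
    ultimately show ?thesis by auto
  qed
  have xbP: "xb \<in> PP" unfolding P_poly_def
  proof (intro CollectI conjI ballI allI impI)
    fix i assume "i \<notin> {1..n}" then show "xb i = 0" using h(1) a2 b2 unfolding xb_def by auto
  next
    show "xb 1 = 1" using h(2) a2 b2 unfolding xb_def by auto
  next
    have "0 \<le> (w a - w bb) * D" using wab D01 by simp
    then show "b \<le> (\<Sum>i=1..n. w i * xb i)" using kn h(3) by (simp add: algebra_simps)
  next
    fix k' assume k': "k' \<in> {1..KK}" "\<rho> ! (k' - 1) < RR"
    then show "(\<Sum>i\<in>S k'. xb i) = real (\<rho>!(k'-1))" using h(4) gs by auto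
  next
    fix k' assume k': "k' \<in> {1..KK}" "\<rho> ! (k' - 1) = RR"
    then show "(\<Sum>i\<in>S k'. xb i) \<ge> real (\<rho>!(k'-1))" using h(5) gs by auto
  next
    fix i assume "i \<in> {2..n} - S_all \<epsilon> n c \<tau>"
    then show "xb i = 0" using h(6) aS bS unfolding xb_def by auto
  next
    fix i assume i: "i \<in> S_all \<epsilon> n c \<tau>"
    then show "0 \<le> xb i" using h(7) sum1 ne unfolding xb_def D_def by auto
  next
    fix i assume i: "i \<in> S_all \<epsilon> n c \<tau>"
    then show "xb i \<le> 1" using h(7) sum1 ne unfolding xb_def D_def by auto
  qed
  have int: "\<forall>i\<in>{1..n}. xb i \<in> {0, 1}"
  proof
    fix i assume i: "i \<in> {1..n}"
    show "xb i \<in> {0, 1}"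
    proof (cases "i = a \<or> i = bb")
      case True then show ?thesis using sum1 ne unfolding xb_def D_def by auto
    next
      case False
      then have "i \<notin> Fr x" using F by auto
      then show ?thesis using nonFr[OF xP i] False unfolding xb_def by auto
    qed
  qed
  define cost where "cost = (\<Sum>i=1..n. c i * x i)"
  define u where "u = inverse ((1+\<epsilon>)^(\<tau>!(k-1)))"
  define v where "v = inverse ((1+\<epsilon>)^k)"
  have upos: "0 < u" unfolding u_def by (rule u_pos)
  have v1: "v \<le> 1" unfolding v_def by (rule u_le1)
  have ca: "c a \<le> u" unfolding u_def by (rule c_lb(2)[OF k ab(1)])
  have cb: "c bb \<ge> u * v" unfolding u_def v_def by (rule c_lb(1)[OF k ab(2)])
  have Sc: "0 \<le> (\<Sum>i\<in>S k. c i * x i)"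
    by (rule sum_nonneg) (use cx_nonneg[OF xP] S_sub[of k] in auto)
  have ck: "cost \<ge> real k * u" using cost_lb[OF xP k] Sc unfolding cost_def u_def by linarith
  have "(c a - c bb) * D \<le> (u - u * v) * D" using ca cb D01 by (intro mult_right_mono) auto
  also have "\<dots> \<le> u - u * v"
  proof -
    have "0 \<le> u - u * v" using upos v1 by (simp add: mult_left_le)
    then show ?thesis using D01 by (simp add: mult_left_le)
  qed
  also have "u - u * v = u * (1 - v)" by (simp add: algebra_simps)
  also have "\<dots> \<le> u * (real k * \<epsilon>)"
    using bern[of k] upos unfolding v_def by (intro mult_left_mono) auto
  also have "\<dots> = \<epsilon> * (real k * u)" by simp
  also have "\<dots> \<le> \<epsilon> * cost" using ck eps by simp
  also have "\<dots> \<le> 2 * \<epsilon> * cost" using cost_ge1[OF xP] eps unfolding cost_def by simp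
  finally have inc: "(c a - c bb) * D \<le> 2 * \<epsilon> * cost" .
  have "(\<Sum>i=1..n. c i * xb i) \<le> (1 + 2 * \<epsilon>) * cost"
    using cs inc unfolding cost_def by (simp add: algebra_simps)
  then show ?thesis using xbP int unfolding cost_def by blast
qed

lemma main:
  assumes ex: "extreme_pt x PP"
  shows "\<exists>xb\<in>PP. (\<forall>i\<in>{1..n}. xb i \<in> {0, 1}) \<and> (\<Sum>i=1..n. c i * xb i) \<le> (1 + 2 * \<epsilon>) * (\<Sum>i=1..n. c i * x i)"
proof -
  have xP: "x \<in> PP" using ex unfolding extreme_pt_def by blast
  consider (A) "Fr x = {}" | (B) j where "Fr x = {j}" "free x j"
    | (C) a bb k where "k \<in> {1..KK}" "a \<in> S k" "bb \<in> S k" "(\<Sum>j\<in>S k. x j) = real (\<rho>!(k-1))"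
         "a \<noteq> bb" "Fr x = {a, bb}" "w bb \<le> w a"
    using struct3[OF xP ex] by blast
  then show ?thesis
  proof cases
    case A
    have int: "\<forall>i\<in>{1..n}. x i \<in> {0, 1}" using nonFr[OF xP] A by auto
    have "0 \<le> (\<Sum>i=1..n. c i * x i)" by (rule sum_nonneg) (use cx_nonneg[OF xP] in auto)
    then have "(\<Sum>i=1..n. c i * x i) \<le> (1 + 2 * \<epsilon>) * (\<Sum>i=1..n. c i * x i)"
      using eps by (simp add: algebra_simps)
    then show ?thesis using xP int by blast
  next
    case B
    then show ?thesis using roundB[OF xP _ B(2) B(1)] by blast
  next
    case C
    then show ?thesis using roundC[OF xP C] by blast
  qed
qed

end

theorem lemma4:
  fixes \<epsilon> b :: real and n :: nat and c w :: "nat \<Rightarrow> real"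
    and \<tau> \<rho> :: "nat list" and xs :: "nat \<Rightarrow> real"
  assumes eps: "0 < \<epsilon>" "\<epsilon> \<le> 1 / 256"
    and n: "1 \<le> n"
    and c_nonneg: "\<forall>i\<in>{1..n}. 0 \<le> c i"
    and w_nonneg: "\<forall>i\<in>{1..n}. 0 \<le> w i"
    and c1: "c 1 = 1"
    and c_sorted: "\<forall>i\<in>{1..n}. \<forall>j\<in>{1..n}. i \<le> j \<longrightarrow> c j \<le> c i"
    and tau: "\<tau> \<in> Gamma \<epsilon>"
    and rho_len: "length \<rho> = length \<tau>"
    and rho_range: "\<forall>k<length \<rho>. 1 \<le> \<rho> ! k \<and> \<rho> ! k \<le> nat \<lceil>1 / \<epsilon>\<rceil>"
    and ext: "extreme_pt xs (P_poly \<epsilon> n c w b \<tau> \<rho>)"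
  shows "\<exists>xb\<in>P_poly \<epsilon> n c w b \<tau> \<rho>. (\<forall>i\<in>{1..n}. xb i \<in> {0, 1})
           \<and> (\<Sum>i=1..n. c i * xb i) \<le> (1 + 2 * \<epsilon>) * (\<Sum>i=1..n. c i * xs i)"
proof -
  interpret M: mk \<epsilon> b n c w \<tau> \<rho>
    by (unfold_locales) (use eps n c_nonneg w_nonneg c1 tau rho_len rho_range in auto)
  show ?thesis by (rule M.main[OF ext])
qed

end
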